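(* Let $B_1,\dots,B_D$ be resonator blocks and define $\Sigma=\bigcup_{\chi_+\in\{1,\dots,D\}^{\mathbb{Z}_{\ge0}}}\big(\sigma(\mathcal{J}_+(\chi_+))\cup\sigma(\mathcal{J}_-(\chi_+))\big)$. Let $M\in\mathbb{N}$ and $\chi_M\in\{1,\dots,D\}^M$, and let $V,C\in\mathbb{R}^{N\times N}$ be the material and capacitance matrices of the finite resonator array determined by $\chi_M$. Then $\sigma(VC)\subset\Sigma$.
   Context: A resonator block $B_d$ is a finite sequence of $\mathrm{len}(B_d)\ge1$ triples $(v_k,\ell_k,s_k)$ of positive reals (wave speed, length, spacing to the next resonator). The finite array of $\chi_M$ is the concatenation $B_{\chi_M(1)},\dots,B_{\chi_M(M)}$, giving $N$ resonators with parameters $(v_i,\ell_i,s_i)_{i=1}^N$. Then $V=\mathrm{diag}(v_1^2/\ell_1,\dots,v_N^2/\ell_N)$ and $C$ is the symmetric tridiagonal matrix with $C_{i,i+1}=C_{i+1,i}=-1/s_i$ ($1\le i\le N-1$), $C_{11}=1/s_1$, $C_{NN}=1/s_{N-1}$, $C_{ii}=1/s_{i-1}+1/s_i$ for $2\le i\le N-1$. For a resonator sequence set $a^{(i)}=-\frac{v_iv_{i+1}}{s_i\sqrt{\ell_i\ell_{i+1}}}$, $b^{(i)}=\frac{v_i^2}{\ell_i}(\frac1{s_{i-1}}+\frac1{s_i})$. $\mathcal{J}_+(\chi_+)$: resonators indexed by $i\ge0$ obtained by concatenating $B_{\chi_+(0)},B_{\chi_+(1)},\dots$; operator on $\ell^2(\mathbb{Z}_{\ge0})$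 with $(\mathcal{J}_+\mathbf{v})^{(i)}=a^{(i-1)}\mathbf{v}^{(i-1)}+a^{(i)}\mathbf{v}^{(i+1)}+b^{(i)}\mathbf{v}^{(i)}$ for $i\ge1$ and $(\mathcal{J}_+\mathbf{v})^{(0)}=a^{(0)}\mathbf{v}^{(1)}+\frac{v_0^2}{\ell_0s_0}\mathbf{v}^{(0)}$. $\mathcal{J}_-(\chi_+)$: resonators indexed by $i\le-1$ obtained by placing blocks $\dots,B_{\chi_+(1)},B_{\chi_+(0)}$ left to right (each block internally in original order, last resonator of $B_{\chi_+(0)}$ at index $-1$); operator on $\ell^2(\mathbb{Z}_{<0})$ given by the bulk formula for $i\le-2$ and $(\mathcal{J}_-\mathbf{v})^{(-1)}=a^{(-2)}\mathbf{v}^{(-2)}+\frac{v_{-1}^2}{\ell_{-1}s_{-2}}\mathbf{v}^{(-1)}$. *)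

theory Defs
  imports "HOL-Analysis.Analysis" "Jordan_Normal_Form.Char_Poly"
begin

(* A resonator is a triple (v, l, s) = (wave speed, length, spacing to the next resonator). *)
type_synonym resonator = "real \<times> real \<times> real"

definition wspeed :: "resonator \<Rightarrow> real" where "wspeed r = fst r"
definition rlen   :: "resonator \<Rightarrow> real" where "rlen r = fst (snd r)"
definition rspace :: "resonator \<Rightarrow> real" where "rspace r = snd (snd r)"

definition is_block :: "resonator list \<Rightarrow> bool" where
  "is_block b \<longleftrightarrow> b \<noteq> [] \<and> (\<forall>r\<in>set b. wspeed r > 0 \<and> rlen r > 0 \<and> rspace r > 0)"

(* Resonators of J_+(chi): index i >= 0 in the concatenation B_{chi 0}, B_{chi 1}, ...
   (the first i+1 blocks contain at least i+1 resonators).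
   Resonators of J_-(chi): index -(j+1), j >= 0, in the left-to-right arrangement
   ..., B_{chi 1}, B_{chi 0}; read from the right this is rev B_{chi 0}, rev B_{chi 1}, ... *)
definition half_line_res :: "(nat \<Rightarrow> resonator list) \<Rightarrow> (nat \<Rightarrow> nat) \<Rightarrow> int \<Rightarrow> resonator" where
  "half_line_res B chi i =
     (if i \<ge> 0 then concat (map (\<lambda>k. B (chi k)) [0..<nat i + 1]) ! nat i
      else concat (map (\<lambda>k. rev (B (chi k))) [0..<nat (-i-1) + 1]) ! nat (-i-1))"

definition jac_a :: "(int \<Rightarrow> resonator) \<Rightarrow> int \<Rightarrow> real" where
  "jac_a r i = - (wspeed (r i) * wspeed (r (i+1)))
                 / (rspace (r i) * sqrt (rlen (r i) * rlen (r (i+1))))"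

definition jac_b :: "(int \<Rightarrow> resonator) \<Rightarrow> int \<Rightarrow> real" where
  "jac_b r i = (wspeed (r i))\<^sup>2 / rlen (r i) * (1 / rspace (r (i-1)) + 1 / rspace (r i))"

definition J_plus :: "(nat \<Rightarrow> resonator list) \<Rightarrow> (nat \<Rightarrow> nat) \<Rightarrow> (int \<Rightarrow> complex) \<Rightarrow> int \<Rightarrow> complex" where
  "J_plus B chi u i =
     (let r = half_line_res B chi in
      if i = 0 then of_real (jac_a r 0) * u 1
                    + of_real ((wspeed (r 0))\<^sup>2 / (rlen (r 0) * rspace (r 0))) * u 0
      else if i \<ge> 1 then of_real (jac_a r (i-1)) * u (i-1) + of_real (jac_a r i) * u (i+1)
                          + of_real (jac_b r i) * u i
      else 0)"

definition J_minus :: "(nat \<Rightarrow> resonator list) \<Rightarrow> (nat \<Rightarrow> nat) \<Rightarrow> (int \<Rightarrow> complex) \<Rightarrow> int \<Rightarrow> complex" where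
  "J_minus B chi u i =
     (let r = half_line_res B chi in
      if i = -1 then of_real (jac_a r (-2)) * u (-2)
                     + of_real ((wspeed (r (-1)))\<^sup>2 / (rlen (r (-1)) * rspace (r (-2)))) * u (-1)
      else if i \<le> -2 then of_real (jac_a r (i-1)) * u (i-1) + of_real (jac_a r i) * u (i+1)
                           + of_real (jac_b r i) * u i
      else 0)"

definition l2 :: "int set \<Rightarrow> (int \<Rightarrow> complex) set" where
  "l2 I = {u. (\<forall>i. i \<notin> I \<longrightarrow> u i = 0) \<and> (\<lambda>i. (cmod (u i))\<^sup>2) summable_on I}"

definition l2_norm :: "int set \<Rightarrow> (int \<Rightarrow> complex) \<Rightarrow> real" where
  "l2_norm I u = sqrt (infsum (\<lambda>i. (cmod (u i))\<^sup>2) I)"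

definition op_spectrum :: "int set \<Rightarrow> ((int \<Rightarrow> complex) \<Rightarrow> int \<Rightarrow> complex) \<Rightarrow> complex set" where
  "op_spectrum I T = {z. \<not> (bij_betw (\<lambda>u i. T u i - z * u i) (l2 I) (l2 I)
        \<and> (\<exists>K. \<forall>u\<in>l2 I. l2_norm I u \<le> K * l2_norm I (\<lambda>i. T u i - z * u i)))}"

definition Sigma_set :: "nat \<Rightarrow> (nat \<Rightarrow> resonator list) \<Rightarrow> complex set" where
  "Sigma_set D B = (\<Union>chi\<in>{chi. \<forall>k. chi k \<in> {1..D}}.
       op_spectrum {i. i \<ge> 0} (J_plus B chi) \<union> op_spectrum {i. i < 0} (J_minus B chi))"

(* Finite array: resonators listed 0-based (paper index i corresponds to list index i-1). *)
definition fin_array :: "(nat \<Rightarrow> resonator list) \<Rightarrow> nat list \<Rightarrow> resonator list" where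
  "fin_array B chiM = concat (map B chiM)"

definition material_mat :: "resonator list \<Rightarrow> real mat" where
  "material_mat R = mat (length R) (length R)
     (\<lambda>(i,j). if i = j then (wspeed (R!i))\<^sup>2 / rlen (R!i) else 0)"

definition capacitance_mat :: "resonator list \<Rightarrow> real mat" where
  "capacitance_mat R = (let N = length R; s = (\<lambda>k. rspace (R!k)) in
     mat N N (\<lambda>(i,j).
       if j = i + 1 then - 1 / s i
       else if i = j + 1 then - 1 / s j
       else if i = j then
         (if i = 0 then 1 / s 0
          else if i = N - 1 then 1 / s (N - 2)
          else 1 / s (i - 1) + 1 / s i)
       else 0))"

end

theory Submission imports Defs begin

lemma geom_contra:
  fixes t C :: real
  assumes t0: "t \<ge> 0" and t1: "t \<le> 1"
    and H: "\<And>m. m \<ge> 1 \<Longrightarrow> (\<Sum>k<m. t ^ k) \<le> C * t ^ m"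
  shows False
proof (cases "t = 0")
  case True
  with H[of 1] show False by simp
next
  case False
  hence tp: "t > 0" using t0 by simp
  have "real m \<le> C" if m1: "m \<ge> 1" for m
  proof -
    have "(\<Sum>k<m. t ^ m) \<le> (\<Sum>k<m. t ^ k)"
      by (intro sum_mono power_decreasing) (use t0 t1 in auto)
    hence "real m * t ^ m \<le> C * t ^ m" using H[OF m1] by simp
    thus ?thesis using tp by simp
  qed
  from this[of "nat \<lceil>C\<rceil> + 1"] show False by linarith
qed

lemma per_k:
  fixes k :: nat
  assumes "\<And>n. n \<ge> n0 \<Longrightarrow> f (n + N) = f n" "n \<ge> n0"
  shows "f (n + k * N) = f n"
proof (induction k)
  case (Suc k)
  have "f (n + Suc k * N) = f ((n + k * N) + N)" by (simp add: algebra_simps)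
  also have "\<dots> = f (n + k * N)" using assms by simp
  finally show ?case using Suc by simp
qed simp

lemma fin_supp:
  fixes g :: "int \<Rightarrow> real" and \<phi> :: "nat \<Rightarrow> int"
  assumes inj: "inj \<phi>" and rng: "range \<phi> = I" and fin: "finite F"
    and z: "\<And>j. j \<notin> F \<Longrightarrow> g (\<phi> j) = 0"
  shows "g summable_on I" "infsum g I = (\<Sum>j\<in>F. g (\<phi> j))"
proof -
  have sub: "\<phi> ` F \<subseteq> I" using rng by auto
  have z': "g x = 0" if "x \<in> I - \<phi> ` F" for x
  proof -
    have "x \<in> range \<phi>" using that rng by simp
    then obtain j where "x = \<phi> j" by auto
    with that z show ?thesis by auto
  qed
  have "g summable_on (\<phi> ` F) \<longleftrightarrow> g summable_on I"
    by (rule summable_on_cong_neutral) (use z' sub in auto)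
  thus "g summable_on I" using fin by simp
  have "infsum g I = infsum g (\<phi> ` F)"
    by (rule infsum_cong_neutral) (use z' sub in auto)
  also have "\<dots> = sum g (\<phi> ` F)" using fin by simp
  also have "\<dots> = (\<Sum>j\<in>F. g (\<phi> j))"
    by (rule sum.reindex_cong[OF inj_on_subset[OF inj]]) auto
  finally show "infsum g I = (\<Sum>j\<in>F. g (\<phi> j))" .
qed

lemma core:
  fixes T :: "(int \<Rightarrow> complex) \<Rightarrow> int \<Rightarrow> complex" and \<phi> :: "nat \<Rightarrow> int" and I :: "int set"
    and a b y :: "nat \<Rightarrow> complex" and \<beta> \<beta>' c z :: complex and N :: nat
  assumes inj\<phi>: "inj \<phi>" and rng: "range \<phi> = I" and N2: "N \<ge> 2"
    and aper: "\<And>n. a (n + N) = a n" and bper: "\<And>n. n \<ge> 1 \<Longrightarrow> b (n + N) = b n"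
    and Trel: "\<And>u j. T u (\<phi> j) = (if j = 0 then a 0 * u (\<phi> 1) + \<beta> * u (\<phi> 0)
                  else a (j-1) * u (\<phi> (j-1)) + a j * u (\<phi> (j+1)) + b j * u (\<phi> j))"
    and E0: "a 0 * y 1 + \<beta> * y 0 = z * y 0"
    and Ei: "\<And>i. 0 < i \<Longrightarrow> i < N - 1 \<Longrightarrow> a (i-1) * y (i-1) + a i * y (i+1) + b i * y i = z * y i"
    and EN: "a (N-2) * y (N-2) + \<beta>' * y (N-1) = z * y (N-1)"
    and R1: "a (N-1) * y (N-1) + c * (b N - \<beta>) * y 0 = 0"
    and R2: "a (N-1) * c * y 0 + (b (N-1) - \<beta>') * y (N-1) = 0"
    and y0: "y 0 \<noteq> 0" and c1: "cmod c \<le> 1"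
  shows "z \<in> op_spectrum I T"
proof -
  have ak: "a (n + k * N) = a n" for n k
  proof (induction k)
    case (Suc k)
    have "n + Suc k * N = (n + k * N) + N" by simp
    then show ?case using Suc aper by metis
  qed simp
  have bk: "b (n + k * N) = b n" if "n \<ge> 1" for n k
  proof (induction k)
    case (Suc k)
    have "n + Suc k * N = (n + k * N) + N" by simp
    then show ?case using Suc bper[of "n + k * N"] that by (metis le_add1 order_trans)
  qed simp
  define Y where "Y j = c ^ (j div N) * y (j mod N)" for j
  have Yk: "Y (k * N + n) = c ^ k * y n" if "n < N" for k n
    using that N2 by (simp add: Y_def)
  define U where "U m i = (if i \<in> I \<and> inv_into UNIV \<phi> i < m * N then Y (inv_into UNIV \<phi> i) else 0)" for m i
  have \<phi>I: "\<phi> j \<in> I" for j using rng by auto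
  have U\<phi>: "U m (\<phi> j) = (if j < m * N then Y j else 0)" for m j
    using \<phi>I inj\<phi> by (simp add: U_def)
  have res: "T (U m) (\<phi> j) - z * U m (\<phi> j) =
      (if j = m * N - 1 then - (c ^ m * a (N-1) * y 0)
       else if j = m * N then - (c ^ m * (b N - \<beta>) * y 0) else 0)" if m1: "m \<ge> 1" for m j
  proof -
    have mN: "m * N \<ge> 2" using m1 N2
      by (metis dual_order.trans mult_1 mult_le_mono1)
    have mpos[simp]: "m \<noteq> 0" and Npos[simp]: "N \<noteq> 0" using m1 N2 by auto
    consider (gt) "j > m * N" | (eq) "j = m * N" | (lt) "j < m * N" by linarith
    thus ?thesis
    proof cases
      case gt
      have h: "j \<noteq> 0" "\<not> j - 1 < m * N" "\<not> j + 1 < m * N" "\<not> j < m * N"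
        "j \<noteq> m * N - 1" "j \<noteq> m * N" using gt mN by auto
      show ?thesis by (simp only: Trel U\<phi> h if_False) simp
    next
      case eq
      have jm: "j - 1 = (m - 1) * N + (N - 1)" using eq m1 N2
        by (cases m) (auto simp: algebra_simps)
      have "a (j - 1) = a (N - 1)" using ak[of "N-1" "m-1"] jm by (simp add: add.commute)
      moreover have "Y (j - 1) = c ^ (m-1) * y (N - 1)" using Yk[of "N-1" "m-1"] jm N2 by simp
      moreover have "c ^ m = c * c ^ (m - 1)" using m1 by (cases m) auto
      ultimately have "T (U m) (\<phi> j) - z * U m (\<phi> j) = c ^ (m-1) * (a (N-1) * y (N-1))"
        using eq mN by (simp add: Trel U\<phi>)
      also have "\<dots> = c^(m-1) * (a (N-1) * y (N-1) + c * (b N - \<beta>) * y 0) - c^m * (b N - \<beta>) * y 0"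
        using \<open>c ^ m = c * c ^ (m - 1)\<close> by (simp add: algebra_simps)
      also have "\<dots> = - (c ^ m * (b N - \<beta>) * y 0)" using R1 by simp
      moreover have "j \<noteq> m * N - 1" using eq mN by simp
      ultimately show ?thesis using eq by simp
    next
      case lt
      define k where "k = j div N"
      define n where "n = j mod N"
      have jkn: "j = k * N + n" by (simp add: k_def n_def)
      have nN: "n < N" using N2 by (simp add: n_def)
      have km: "k < m" using lt jkn
        by (metis add_lessD1 mult_less_cancel2)
      consider (z0) "n = 0" "k = 0" | (zk) "n = 0" "k \<ge> 1" | (mid) "0 < n" "n < N - 1"
        | (lastin) "n = N - 1" "k + 1 < m" | (lastout) "n = N - 1" "k + 1 = m"
        using nN km by linarith
      thus ?thesis
      proof cases
        case z0
        hence j0: "j = 0" using jkn by simp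
        have "Y 1 = y 1" using Yk[of 1 0] N2 by simp
        moreover have "Y 0 = y 0" using Yk[of 0 0] N2 by simp
        ultimately show ?thesis using j0 mN E0 by (simp add: Trel U\<phi>)
      next
        case zk
        obtain k' where k': "k = Suc k'" using zk by (cases k) auto
        have j1: "j - 1 = (k - 1) * N + (N - 1)" using zk jkn N2 k' by simp
        have j2: "j + 1 = k * N + 1" using zk jkn by simp
        have jpos: "j \<noteq> 0" using zk jkn N2 by simp
        have ne1: "j \<noteq> m * N - 1"
        proof
          assume "j = m * N - 1"
          hence "k * N = m * N - 1" using zk jkn by simp
          moreover have "k * N \<le> (m - 1) * N" using km by (intro mult_le_mono1) simp
          moreover have "(m - 1) * N = m * N - N" by (simp add: diff_mult_distrib)
          ultimately show False using N2 mN by linarith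
        qed
        have Ya: "Y (j - 1) = c ^ (k-1) * y (N - 1)" using Yk[of "N-1" "k-1"] j1 N2 by simp
        have Yb: "Y (j + 1) = c ^ k * y 1" using Yk[of 1 k] j2 N2 by simp
        have Yc: "Y j = c ^ k * y 0" using Yk[of 0 k] jkn zk N2 by simp
        have aa: "a (j - 1) = a (N - 1)" using ak[of "N-1" "k-1"] j1 by (simp add: add.commute)
        have ab: "a j = a 0" using ak[of 0 k] jkn zk by simp
        have bb: "b j = b N" using bk[of N "k-1"] jkn zk N2
          by (cases k) (auto simp: algebra_simps)
        have j1lt: "j + 1 < m * N"
        proof -
          have "j + 1 = k * N + 1" by (rule j2)
          also have "\<dots> < k * N + N" using N2 by simp
          also have "\<dots> = (k + 1) * N" by simp
          also have "\<dots> \<le> m * N" using km by (intro mult_le_mono1) simp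
          finally show ?thesis .
        qed
        have ck: "c ^ k = c * c ^ (k - 1)" using zk by (cases k) auto
        have "T (U m) (\<phi> j) - z * U m (\<phi> j)
            = a (N - 1) * (c ^ (k-1) * y (N - 1)) + a 0 * (c ^ k * y 1) + b N * (c ^ k * y 0)
              - z * (c ^ k * y 0)"
          using jpos lt j1lt Ya Yb Yc aa ab bb by (simp add: Trel U\<phi>)
        also have "\<dots> = c ^ (k-1) * (a (N-1) * y (N-1) + c * (b N - \<beta>) * y 0)
              + c ^ k * (a 0 * y 1 + \<beta> * y 0 - z * y 0)"
          using ck by (simp add: algebra_simps)
        also have "\<dots> = 0" using R1 E0 by simp
        finally show ?thesis using ne1 lt by simp
      next
        case mid
        have jpos: "j \<noteq> 0" using mid jkn by simp
        have j1: "j - 1 = k * N + (n - 1)" using mid jkn by simp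
        have j2: "j + 1 = k * N + (n + 1)" using jkn by simp
        have Ya: "Y (j - 1) = c ^ k * y (n - 1)" using Yk[of "n-1" k] j1 nN by simp
        have Yb: "Y (j + 1) = c ^ k * y (n + 1)" using Yk[of "n+1" k] j2 mid by simp
        have Yc: "Y j = c ^ k * y n" using Yk[of n k] jkn nN by simp
        have aa: "a (j - 1) = a (n - 1)" using ak[of "n-1" k] j1 by (simp add: add.commute)
        have ab: "a j = a n" using ak[of n k] jkn by (simp add: add.commute)
        have bb: "b j = b n" using bk[of n k] jkn mid by (simp add: add.commute)
        have j1lt: "j + 1 < m * N"
        proof -
          have "j + 1 = k * N + (n + 1)" by (rule j2)
          also have "\<dots> < k * N + N" using mid by simp
          also have "\<dots> = (k + 1) * N" by simp
          also have "\<dots> \<le> m * N" using km by (intro mult_le_mono1) simp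
          finally show ?thesis .
        qed
        have ne1: "j \<noteq> m * N - 1" using j1lt by simp
        have "T (U m) (\<phi> j) - z * U m (\<phi> j)
            = a (n - 1) * (c ^ k * y (n - 1)) + a n * (c ^ k * y (n + 1)) + b n * (c ^ k * y n)
              - z * (c ^ k * y n)"
          using jpos lt j1lt Ya Yb Yc aa ab bb by (simp add: Trel U\<phi>)
        also have "\<dots> = c ^ k * (a (n-1) * y (n-1) + a n * y (n+1) + b n * y n - z * y n)"
          by (simp add: algebra_simps)
        also have "\<dots> = 0" using Ei[OF mid] by simp
        finally show ?thesis using ne1 lt by simp
      next
        case lastin
        have jpos: "j \<noteq> 0" using lastin jkn N2 by simp
        have j1: "j - 1 = k * N + (N - 2)" using lastin jkn N2 by simp
        have j2: "j + 1 = (k + 1) * N + 0" using lastin jkn N2 by simp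
        have Ya: "Y (j - 1) = c ^ k * y (N - 2)" using Yk[of "N-2" k] j1 N2 by simp
        have Yb: "Y (j + 1) = c ^ (k+1) * y 0" using Yk[of 0 "k+1"] j2 N2 by simp
        have Yc: "Y j = c ^ k * y (N - 1)" using Yk[of "N-1" k] jkn lastin N2 by simp
        have aa: "a (j - 1) = a (N - 2)" using ak[of "N-2" k] j1 by (simp add: add.commute)
        have ab: "a j = a (N - 1)" using ak[of "N-1" k] jkn lastin by (simp add: add.commute)
        have bb: "b j = b (N - 1)" using bk[of "N-1" k] jkn lastin N2 by (simp add: add.commute)
        have j1lt: "j + 1 < m * N"
        proof -
          have "j + 1 = (k + 1) * N" using j2 by simp
          also have "\<dots> < m * N" using lastin N2 by (intro mult_strict_right_mono) auto
          finally show ?thesis .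
        qed
        have ne1: "j \<noteq> m * N - 1" using j1lt by simp
        have "T (U m) (\<phi> j) - z * U m (\<phi> j)
            = a (N - 2) * (c ^ k * y (N - 2)) + a (N-1) * (c ^ (k+1) * y 0) + b (N-1) * (c ^ k * y (N-1))
              - z * (c ^ k * y (N-1))"
          using jpos lt j1lt Ya Yb Yc aa ab bb by (simp add: Trel U\<phi>)
        also have "\<dots> = c ^ k * (a (N - 2) * y (N - 2) + \<beta>' * y (N - 1) - z * y (N - 1))
             + c ^ k * (a (N-1) * c * y 0 + (b (N-1) - \<beta>') * y (N-1))"
          by (simp add: algebra_simps)
        also have "\<dots> = 0" using EN R2 by simp
        finally show ?thesis using ne1 lt by simp
      next
        case lastout
        have jpos: "j \<noteq> 0" using lastout jkn N2 by simp
        have j1: "j - 1 = k * N + (N - 2)" using lastout jkn N2 by simp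
        have "j + 1 = k * N + N" using lastout jkn N2 by simp
        moreover have "m * N = k * N + N" using lastout(2) by (auto simp: algebra_simps)
        ultimately have j2: "j + 1 = m * N" by simp
        have Ya: "Y (j - 1) = c ^ k * y (N - 2)" using Yk[of "N-2" k] j1 N2 by simp
        have Yc: "Y j = c ^ k * y (N - 1)" using Yk[of "N-1" k] jkn lastout N2 by simp
        have aa: "a (j - 1) = a (N - 2)" using ak[of "N-2" k] j1 by (simp add: add.commute)
        have bb: "b j = b (N - 1)" using bk[of "N-1" k] jkn lastout N2 by (simp add: add.commute)
        have eq1: "j = m * N - 1" using j2 by simp
        have cm: "c ^ m = c ^ k * c" using lastout by auto
        have "T (U m) (\<phi> j) - z * U m (\<phi> j)
            = a (N - 2) * (c ^ k * y (N - 2)) + b (N-1) * (c ^ k * y (N-1))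
              - z * (c ^ k * y (N-1))"
          using jpos lt j2 Ya Yc aa bb by (simp add: Trel U\<phi>)
        also have "\<dots> = c ^ k * (a (N - 2) * y (N - 2) + \<beta>' * y (N - 1) - z * y (N - 1))
             + c ^ k * (a (N-1) * c * y 0 + (b (N-1) - \<beta>') * y (N-1))
             - c ^ k * c * a (N-1) * y 0"
          by (simp add: algebra_simps)
        also have "\<dots> = - (c ^ m * a (N-1) * y 0)" using EN R2 cm by simp
        finally show ?thesis using eq1 by simp
      qed
    qed
  qed

  have Uout: "U m i = 0" if "i \<notin> I" for m i using that by (simp add: U_def)
  have sumU: "(\<lambda>i. (cmod (U m i))\<^sup>2) summable_on I \<and>
      infsum (\<lambda>i. (cmod (U m i))\<^sup>2) I = (\<Sum>j<m*N. (cmod (Y j))\<^sup>2)" for m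
  proof -
    have "(\<lambda>i. (cmod (U m i))\<^sup>2) summable_on I \<and>
      infsum (\<lambda>i. (cmod (U m i))\<^sup>2) I = (\<Sum>j<m*N. (cmod (U m (\<phi> j)))\<^sup>2)"
      using fin_supp[OF inj\<phi> rng, of "{..<m*N}" "\<lambda>i. (cmod (U m i))\<^sup>2"] by (auto simp: U\<phi>)
    thus ?thesis by (simp add: U\<phi>)
  qed
  have l2U: "U m \<in> l2 I" for m using sumU Uout by (auto simp: l2_def)
  define A where "A = (cmod (a (N-1)))\<^sup>2 + (cmod (b N - \<beta>))\<^sup>2"
  have sumR: "infsum (\<lambda>i. (cmod (T (U m) i - z * U m i))\<^sup>2) I
      = (cmod c ^ 2) ^ m * (cmod (y 0))\<^sup>2 * A" if m1: "m \<ge> 1" for m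
  proof -
    have mN: "m * N \<ge> 2" using m1 N2
      by (metis dual_order.trans mult_1 mult_le_mono1)
    have "infsum (\<lambda>i. (cmod (T (U m) i - z * U m i))\<^sup>2) I
        = (\<Sum>j\<in>{m*N-1, m*N}. (cmod (T (U m) (\<phi> j) - z * U m (\<phi> j)))\<^sup>2)"
      by (rule fin_supp(2)[OF inj\<phi> rng]) (auto simp: res[OF m1])
    also have "\<dots> = (cmod (c ^ m * a (N-1) * y 0))\<^sup>2 + (cmod (c ^ m * (b N - \<beta>) * y 0))\<^sup>2"
      using mN by (simp add: res[OF m1])
    also have "\<dots> = (cmod c ^ 2) ^ m * (cmod (y 0))\<^sup>2 * A"
    proof -
      have e: "(cmod c ^ m)\<^sup>2 = (cmod c ^ 2) ^ m" by (simp flip: power_mult add: mult.commute)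
      show ?thesis unfolding A_def norm_mult norm_power power_mult_distrib e
        by (simp add: algebra_simps)
    qed
    finally show ?thesis .
  qed
  have lowS: "(\<Sum>k<m. (cmod c ^ 2) ^ k) * (cmod (y 0))\<^sup>2 \<le> (\<Sum>j<m*N. (cmod (Y j))\<^sup>2)" for m
  proof -
    have inj: "inj_on (\<lambda>k. k * N) {..<m}" using N2 by (auto simp: inj_on_def)
    have Y0: "Y (k * N) = c ^ k * y 0" for k using Yk[of 0 k] N2 by simp
    have e: "(cmod c ^ k)\<^sup>2 = (cmod c ^ 2) ^ k" for k by (simp flip: power_mult add: mult.commute)
    have "(\<Sum>k<m. (cmod c ^ 2) ^ k) * (cmod (y 0))\<^sup>2 = (\<Sum>k<m. (cmod c ^ 2) ^ k * (cmod (y 0))\<^sup>2)"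
      by (rule sum_distrib_right)
    also have "\<dots> = (\<Sum>k<m. (cmod (Y (k * N)))\<^sup>2)"
      by (rule sum.cong) (simp_all only: Y0 norm_mult norm_power power_mult_distrib e)
    also have "\<dots> = (\<Sum>j\<in>(\<lambda>k. k * N) ` {..<m}. (cmod (Y j))\<^sup>2)"
      by (simp add: sum.reindex[OF inj])
    also have "\<dots> \<le> (\<Sum>j<m*N. (cmod (Y j))\<^sup>2)"
    proof (rule sum_mono2)
      show "(\<lambda>k. k * N) ` {..<m} \<subseteq> {..<m * N}"
      proof
        fix x assume "x \<in> (\<lambda>k. k * N) ` {..<m}"
        then obtain k where "k < m" "x = k * N" by auto
        moreover have "k * N < m * N" using \<open>k < m\<close> N2 by simp
        ultimately show "x \<in> {..<m * N}" by simp
      qed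
    qed auto
    finally show ?thesis .
  qed
  show ?thesis
  proof (rule ccontr)
    assume "z \<notin> op_spectrum I T"
    then obtain K where K: "\<And>u. u \<in> l2 I \<Longrightarrow> l2_norm I u \<le> K * l2_norm I (\<lambda>i. T u i - z * u i)"
      unfolding op_spectrum_def by blast
    have y0p: "(cmod (y 0))\<^sup>2 > 0" using y0 by simp
    show False
    proof (rule geom_contra[of "cmod c ^ 2" "K\<^sup>2 * A"])
      show "0 \<le> cmod c ^ 2" by simp
      show "cmod c ^ 2 \<le> 1" using c1 by (simp add: power_le_one)
      fix m :: nat assume m1: "m \<ge> 1"
      define S where "S = (\<Sum>j<m*N. (cmod (Y j))\<^sup>2)"
      define R where "R = (cmod c ^ 2) ^ m * (cmod (y 0))\<^sup>2 * A"
      have S0: "S \<ge> 0" by (simp add: S_def sum_nonneg)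
      have "sqrt S \<le> K * sqrt R"
        using K[OF l2U[of m]] sumU[of m] sumR[OF m1] by (simp add: l2_norm_def S_def R_def)
      hence "(sqrt S)\<^sup>2 \<le> (K * sqrt R)\<^sup>2" using S0 by (intro power_mono) auto
      moreover have "R \<ge> 0" by (simp add: R_def A_def)
      ultimately have "S \<le> K\<^sup>2 * R" using S0 by (simp add: power_mult_distrib)
      hence "(\<Sum>k<m. (cmod c ^ 2) ^ k) * (cmod (y 0))\<^sup>2 \<le> (K\<^sup>2 * A * (cmod c ^ 2) ^ m) * (cmod (y 0))\<^sup>2"
        using lowS[of m] by (simp add: S_def R_def algebra_simps)
      thus "(\<Sum>k<m. (cmod c ^ 2) ^ k) \<le> K\<^sup>2 * A * (cmod c ^ 2) ^ m"
        using y0p by simp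
    qed
  qed
qed

lemma bridge:
  fixes T :: "(int \<Rightarrow> complex) \<Rightarrow> int \<Rightarrow> complex" and \<phi> :: "nat \<Rightarrow> int" and I :: "int set"
    and q w :: "nat \<Rightarrow> real" and x :: "nat \<Rightarrow> complex" and c z :: complex and N :: nat
  assumes inj\<phi>: "inj \<phi>" and rng: "range \<phi> = I" and N2: "N \<ge> 2"
    and qper: "\<And>n. q (n + N) = q n" and wper: "\<And>n. w (n + N) = w n"
    and qnz: "\<And>n. q n \<noteq> 0"
    and Trel: "\<And>u j. T u (\<phi> j) = (if j = 0 then of_real (- (q 0 * q 1 * w 0)) * u (\<phi> 1)
                     + of_real ((q 0)\<^sup>2 * w 0) * u (\<phi> 0)
                  else of_real (- (q (j-1) * q j * w (j-1))) * u (\<phi> (j-1))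
                     + of_real (- (q j * q (j+1) * w j)) * u (\<phi> (j+1))
                     + of_real ((q j)\<^sup>2 * (w (j-1) + w j)) * u (\<phi> j))"
    and F0: "of_real ((q 0)\<^sup>2 * w 0) * (x 0 - x 1) = z * x 0"
    and Fi: "\<And>i. 0 < i \<Longrightarrow> i < N - 1 \<Longrightarrow>
        of_real ((q i)\<^sup>2) * (of_real (w (i-1)) * (x i - x (i-1)) + of_real (w i) * (x i - x (i+1))) = z * x i"
    and FN: "of_real ((q (N-1))\<^sup>2 * w (N-2)) * (x (N-1) - x (N-2)) = z * x (N-1)"
    and cx: "c * x 0 = x (N-1)" and x0: "x 0 \<noteq> 0" and c1: "cmod c \<le> 1"
  shows "z \<in> op_spectrum I T"
proof -
  define a where "a n = complex_of_real (- (q n * q (n+1) * w n))" for n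
  define b where "b n = complex_of_real ((q n)\<^sup>2 * (w (n-1) + w n))" for n
  define y where "y n = x n / complex_of_real (q n)" for n
  have qnz': "complex_of_real (q n) \<noteq> 0" for n using qnz by simp
  show ?thesis
  proof (rule core[OF inj\<phi> rng N2, where a = a and b = b and y = y and c = c
      and \<beta> = "of_real ((q 0)\<^sup>2 * w 0)" and \<beta>' = "of_real ((q (N-1))\<^sup>2 * w (N-2))"])
    show "a (n + N) = a n" for n
      using qper[of n] qper[of "n+1"] wper[of n] by (simp add: a_def)
    show "b (n + N) = b n" if "1 \<le> n" for n
    proof -
      have "n + N - 1 = (n - 1) + N" using that by simp
      thus ?thesis using qper[of n] wper[of n] wper[of "n-1"] by (simp add: b_def)
    qed
    show "T u (\<phi> j) = (if j = 0 then a 0 * u (\<phi> 1) + of_real ((q 0)\<^sup>2 * w 0) * u (\<phi> 0)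
                  else a (j-1) * u (\<phi> (j-1)) + a j * u (\<phi> (j+1)) + b j * u (\<phi> j))" for u j
      by (cases j) (simp_all add: Trel a_def b_def)
    show "a 0 * y 1 + of_real ((q 0)\<^sup>2 * w 0) * y 0 = z * y 0"
    proof -
      have "a 0 * y 1 + of_real ((q 0)\<^sup>2 * w 0) * y 0
          = (of_real ((q 0)\<^sup>2 * w 0) * (x 0 - x 1)) / of_real (q 0)"
        using qnz'[of 0] qnz'[of 1] by (simp add: a_def y_def field_simps power2_eq_square)
      thus ?thesis using F0 by (simp add: y_def)
    qed
    show "a (i-1) * y (i-1) + a i * y (i+1) + b i * y i = z * y i" if "0 < i" "i < N - 1" for i
    proof -
      have "a (i-1) * y (i-1) + a i * y (i+1) + b i * y i
          = (of_real ((q i)\<^sup>2) * (of_real (w (i-1)) * (x i - x (i-1)) + of_real (w i) * (x i - x (i+1))))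
            / of_real (q i)"
        using qnz'[of i] qnz'[of "i-1"] qnz'[of "i+1"] that
        by (simp add: a_def b_def y_def field_simps power2_eq_square)
      thus ?thesis using Fi[OF that] by (simp add: y_def)
    qed
    show "a (N-2) * y (N-2) + of_real ((q (N-1))\<^sup>2 * w (N-2)) * y (N-1) = z * y (N-1)"
    proof -
      have e: "Suc (N - 2) = N - 1" using N2 by simp
      have "a (N-2) * y (N-2) + of_real ((q (N-1))\<^sup>2 * w (N-2)) * y (N-1)
          = (of_real ((q (N-1))\<^sup>2 * w (N-2)) * (x (N-1) - x (N-2))) / of_real (q (N-1))"
        using qnz'[of "N-1"] qnz'[of "N-2"] by (simp add: a_def y_def e field_simps power2_eq_square)
      thus ?thesis using FN by (simp add: y_def)
    qed
    have qN: "q N = q 0" using qper[of 0] by simp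
    have wN: "w N = w 0" using wper[of 0] by simp
    have e1: "Suc (N - Suc 0) = N" using N2 by simp
    have e2: "N - Suc 0 - Suc 0 = N - 2" "N - Suc (Suc 0) = N - 2" by simp_all
    show "a (N-1) * y (N-1) + c * (b N - of_real ((q 0)\<^sup>2 * w 0)) * y 0 = 0"
    proof -
      have "a (N-1) * y (N-1) + c * (b N - of_real ((q 0)\<^sup>2 * w 0)) * y 0
          = of_real (q 0 * w (N-1)) * (c * x 0 - x (N-1))"
        using qnz'[of "N-1"] qnz'[of 0]
        by (simp add: a_def b_def y_def e1 qN wN field_simps power2_eq_square)
      thus ?thesis using cx by simp
    qed
    show "a (N-1) * c * y 0 + (b (N-1) - of_real ((q (N-1))\<^sup>2 * w (N-2))) * y (N-1) = 0"
    proof -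
      have "a (N-1) * c * y 0 + (b (N-1) - of_real ((q (N-1))\<^sup>2 * w (N-2))) * y (N-1)
          = of_real (q (N-1) * w (N-1)) * (x (N-1) - c * x 0)"
        using qnz'[of "N-1"] qnz'[of 0]
        by (simp add: a_def b_def y_def e1 e2 qN wN field_simps power2_eq_square)
      thus ?thesis using cx by simp
    qed
    show "y 0 \<noteq> 0" using x0 qnz'[of 0] by (simp add: y_def)
    show "cmod c \<le> 1" by (rule c1)
  qed
qed

definition qf :: "resonator \<Rightarrow> real" where "qf r = wspeed r / sqrt (rlen r)"

definition fin_eqs :: "nat \<Rightarrow> (nat \<Rightarrow> real) \<Rightarrow> (nat \<Rightarrow> real) \<Rightarrow> (nat \<Rightarrow> complex) \<Rightarrow> complex \<Rightarrow> bool" where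
  "fin_eqs N q w x z \<longleftrightarrow>
     of_real ((q 0)\<^sup>2 * w 0) * (x 0 - x 1) = z * x 0 \<and>
     (\<forall>i. 0 < i \<and> i < N - 1 \<longrightarrow>
        of_real ((q i)\<^sup>2) * (of_real (w (i-1)) * (x i - x (i-1)) + of_real (w i) * (x i - x (i+1))) = z * x i) \<and>
     of_real ((q (N-1))\<^sup>2 * w (N-2)) * (x (N-1) - x (N-2)) = z * x (N-1)"

lemma qf_sq: "rlen r > 0 \<Longrightarrow> (qf r)\<^sup>2 = (wspeed r)\<^sup>2 / rlen r"
  by (simp add: qf_def power_divide)

lemma mat_eqs:
  fixes R :: "resonator list" and z :: complex
  assumes pos: "\<forall>r\<in>set R. wspeed r > 0 \<and> rlen r > 0 \<and> rspace r > 0" and N2: "length R \<ge> 2"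
    and ev: "eigenvalue (map_mat complex_of_real (material_mat R * capacitance_mat R)) z"
  shows "\<exists>x. (\<exists>i<length R. x i \<noteq> 0) \<and> fin_eqs (length R) (\<lambda>i. qf (R!i)) (\<lambda>i. 1 / rspace (R!i)) x z"
proof -
  define N where "N = length R"
  define A where "A = map_mat complex_of_real (material_mat R * capacitance_mat R)"
  define p where "p i = (wspeed (R!i))\<^sup>2 / rlen (R!i)" for i
  define s where "s i = rspace (R!i)" for i
  have N2': "N \<ge> 2" using N2 by (simp add: N_def)
  have dimA: "dim_row A = N" "dim_col A = N"
    by (simp_all add: A_def N_def material_mat_def capacitance_mat_def Let_def)
  obtain v where vc: "v \<in> carrier_vec N" and vnz: "v \<noteq> 0\<^sub>v N" and Av: "A *\<^sub>v v = z \<cdot>\<^sub>v v"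
    using ev unfolding eigenvalue_def eigenvector_def A_def[symmetric] dimA by blast
  define x where "x i = v $ i" for i
  have dimv: "dim_vec v = N" using vc by simp
  have nz: "\<exists>i<N. x i \<noteq> 0"
  proof (rule ccontr)
    assume "\<not> (\<exists>i<N. x i \<noteq> 0)"
    hence "v = 0\<^sub>v N" by (intro eq_vecI) (auto simp: x_def dimv)
    with vnz show False by simp
  qed
  have Cent: "capacitance_mat R $$ (i,j) = (if j = i + 1 then - 1 / s i
       else if i = j + 1 then - 1 / s j
       else if i = j then
         (if i = 0 then 1 / s 0
          else if i = N - 1 then 1 / s (N - 2)
          else 1 / s (i - 1) + 1 / s i)
       else 0)" if "i < N" "j < N" for i j
    using that by (simp add: capacitance_mat_def Let_def s_def N_def)
  have row: "z * x i = (\<Sum>j<N. of_real (p i * capacitance_mat R $$ (i,j)) * x j)" if iN: "i < N" for i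
  proof -
    have "z * x i = (A *\<^sub>v v) $ i" using Av iN dimv by (simp add: x_def)
    also have "\<dots> = (\<Sum>j\<in>{0..<N}. A $$ (i,j) * v $ j)"
      using iN dimA dimv by (simp add: scalar_prod_def)
    also have "\<dots> = (\<Sum>j<N. of_real (p i * capacitance_mat R $$ (i,j)) * x j)"
    proof (rule sum.cong)
      fix j assume "j \<in> {..<N}"
      hence jN: "j < N" by simp
      have "(material_mat R * capacitance_mat R) $$ (i,j)
          = (\<Sum>k\<in>{0..<N}. material_mat R $$ (i,k) * capacitance_mat R $$ (k,j))"
        using iN jN by (simp add: material_mat_def capacitance_mat_def Let_def N_def scalar_prod_def)
      also have "\<dots> = (\<Sum>k\<in>{0..<N}. (if k = i then p i * capacitance_mat R $$ (i,j) else 0))"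
        by (rule sum.cong) (use iN in \<open>auto simp: material_mat_def N_def p_def\<close>)
      also have "\<dots> = p i * capacitance_mat R $$ (i,j)" using iN by simp
      finally show "A $$ (i,j) * v $ j = of_real (p i * capacitance_mat R $$ (i,j)) * x j"
        using iN jN dimA by (simp add: A_def x_def material_mat_def N_def)
    qed (auto)
    finally show ?thesis .
  qed
  have sum2: "(\<Sum>j<N. g j) = (\<Sum>j\<in>S. g j)" if "S \<subseteq> {..<N}" "\<And>j. j < N \<Longrightarrow> j \<notin> S \<Longrightarrow> g j = 0"
    for S and g :: "nat \<Rightarrow> complex"
    by (rule sum.mono_neutral_right) (use that in auto)
  have ppos: "p i > 0" "s i > 0" "rlen (R!i) > 0" if "i < N" for i
  proof -
    have "R!i \<in> set R" using that by (simp add: N_def)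
    hence "wspeed (R!i) > 0" "rlen (R!i) > 0" "rspace (R!i) > 0" using pos by auto
    thus "p i > 0" "s i > 0" "rlen (R!i) > 0" by (simp_all add: p_def s_def)
  qed
  have qsq: "(qf (R!i))\<^sup>2 = p i" if "i < N" for i using qf_sq ppos[OF that] by (simp add: p_def)
  have F0: "of_real ((qf (R!0))\<^sup>2 * (1 / rspace (R!0))) * (x 0 - x 1) = z * x 0"
  proof -
    have "z * x 0 = (\<Sum>j<N. of_real (p 0 * capacitance_mat R $$ (0,j)) * x j)"
      by (rule row) (use N2 in \<open>auto simp: N_def\<close>)
    also have "\<dots> = (\<Sum>j\<in>{0,1}. of_real (p 0 * capacitance_mat R $$ (0,j)) * x j)"
      by (rule sum2) (use N2' in \<open>auto simp: Cent\<close>)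
    also have "\<dots> = of_real (p 0 * (1 / s 0)) * x 0 + of_real (p 0 * (- 1 / s 0)) * x 1"
      using N2' by (simp add: Cent)
    also have "\<dots> = of_real (p 0 * (1 / s 0)) * (x 0 - x 1)"
      by (simp add: algebra_simps diff_divide_distrib add_divide_distrib)
    finally show ?thesis using qsq[of 0] N2' by (simp add: s_def)
  qed
  have Fi: "of_real ((qf (R!i))\<^sup>2) * (of_real (1 / rspace (R!(i-1))) * (x i - x (i-1))
        + of_real (1 / rspace (R!i)) * (x i - x (i+1))) = z * x i" if i: "0 < i" "i < N - 1" for i
  proof -
    have "z * x i = (\<Sum>j<N. of_real (p i * capacitance_mat R $$ (i,j)) * x j)"
      using row[of i] i by simp
    also have "\<dots> = (\<Sum>j\<in>{i-1,i,i+1}. of_real (p i * capacitance_mat R $$ (i,j)) * x j)"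
      by (rule sum2) (use i in \<open>auto simp: Cent\<close>)
    also have "\<dots> = of_real (p i * (- 1 / s (i-1))) * x (i-1) + of_real (p i * (1 / s (i-1) + 1 / s i)) * x i
        + of_real (p i * (- 1 / s i)) * x (i+1)"
    proof -
      have d: "i - 1 \<noteq> i" "i - 1 \<noteq> i + 1" "i \<noteq> i + 1" using i by auto
      have c1: "capacitance_mat R $$ (i, i-1) = - 1 / s (i-1)"
        using i Cent[of i "i-1"] by auto
      have c2: "capacitance_mat R $$ (i, i) = 1 / s (i-1) + 1 / s i"
        using i Cent[of i i] by auto
      have c3: "capacitance_mat R $$ (i, i+1) = - 1 / s i"
        using i Cent[of i "i+1"] by auto
      show ?thesis using d by (simp only: sum.insert_if finite.emptyI finite_insert insert_iff empty_iff sum.empty c1 c2 c3 if_False simp_thms) (simp add: algebra_simps)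
    qed
    also have "\<dots> = of_real (p i) * (of_real (1 / s (i-1)) * (x i - x (i-1)) + of_real (1 / s i) * (x i - x (i+1)))"
      by (simp add: algebra_simps diff_divide_distrib add_divide_distrib)
    finally show ?thesis using qsq[of i] i by (simp add: s_def)
  qed
  have FN: "of_real ((qf (R!(N-1)))\<^sup>2 * (1 / rspace (R!(N-2)))) * (x (N-1) - x (N-2)) = z * x (N-1)"
  proof -
    have "z * x (N-1) = (\<Sum>j<N. of_real (p (N-1) * capacitance_mat R $$ (N-1,j)) * x j)"
      by (rule row) (use N2 in \<open>auto simp: N_def\<close>)
    also have "\<dots> = (\<Sum>j\<in>{N-2,N-1}. of_real (p (N-1) * capacitance_mat R $$ (N-1,j)) * x j)"
      by (rule sum2) (use N2' in \<open>auto simp: Cent\<close>)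
    also have "\<dots> = of_real (p (N-1) * (- 1 / s (N-2))) * x (N-2) + of_real (p (N-1) * (1 / s (N-2))) * x (N-1)"
    proof -
      have d: "N - 2 \<noteq> N - 1" using N2' by auto
      have c1: "capacitance_mat R $$ (N-1, N-2) = - 1 / s (N-2)"
        using N2' Cent[of "N-1" "N-2"] by auto
      have c2: "capacitance_mat R $$ (N-1, N-1) = 1 / s (N-2)"
        using N2' Cent[of "N-1" "N-1"] by auto
      show ?thesis using d by (simp only: sum.insert_if finite.emptyI finite_insert insert_iff empty_iff sum.empty c1 c2 if_False simp_thms) (simp add: algebra_simps)
    qed
    also have "\<dots> = of_real (p (N-1) * (1 / s (N-2))) * (x (N-1) - x (N-2))"
      by (simp add: algebra_simps diff_divide_distrib add_divide_distrib)
    finally show ?thesis using qsq[of "N-1"] N2' by (simp add: s_def)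
  qed
  show ?thesis
    using nz F0 Fi FN unfolding fin_eqs_def N_def by blast
qed

lemma x0_nz:
  assumes fe: "fin_eqs N q w x z" and N2: "N \<ge> 2"
    and qnz: "\<And>i. q i \<noteq> 0" and wnz: "\<And>i. w i \<noteq> 0"
    and nz: "\<exists>i<N. x i \<noteq> 0"
  shows "x 0 \<noteq> 0"
proof
  assume x0: "x 0 = 0"
  have F0: "of_real ((q 0)\<^sup>2 * w 0) * (x 0 - x 1) = z * x 0" using fe by (simp add: fin_eqs_def)
  have Fi: "of_real ((q i)\<^sup>2) * (of_real (w (i-1)) * (x i - x (i-1)) + of_real (w i) * (x i - x (i+1))) = z * x i"
    if "0 < i" "i < N - 1" for i using fe that by (simp add: fin_eqs_def)
  have all: "x i = 0 \<and> x (i+1) = 0" if "i + 1 < N" for i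
    using that
  proof (induction i)
    case 0
    have "of_real ((q 0)\<^sup>2 * w 0) * x 1 = 0" using F0 x0 by simp
    thus ?case using qnz[of 0] wnz[of 0] x0 by simp
  next
    case (Suc i)
    hence ih: "x i = 0" "x (i+1) = 0" by auto
    have "of_real ((q (i+1))\<^sup>2) * (of_real (w i) * (x (i+1) - x i) + of_real (w (i+1)) * (x (i+1) - x (i+2))) = z * x (i+1)"
      using Fi[of "i+1"] Suc.prems by simp
    hence "of_real ((q (i+1))\<^sup>2) * of_real (w (i+1)) * x (i+2) = 0" using ih by simp
    thus ?case using qnz[of "i+1"] wnz[of "i+1"] ih by simp
  qed
  have "x i = 0" if "i < N" for i
  proof (cases i)
    case 0 thus ?thesis using x0 by simp
  next
    case (Suc k) thus ?thesis using all[of k] that by simp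
  qed
  with nz show False by blast
qed

lemma fin_eqs_rev:
  assumes fe: "fin_eqs N q w x z" and N2: "N \<ge> 2"
  shows "fin_eqs N (\<lambda>j. q (N-1-j)) (\<lambda>j. w (N-2-j)) (\<lambda>j. x (N-1-j)) z"
proof -
  have F0: "of_real ((q 0)\<^sup>2 * w 0) * (x 0 - x 1) = z * x 0" using fe by (simp add: fin_eqs_def)
  have Fi: "of_real ((q i)\<^sup>2) * (of_real (w (i-1)) * (x i - x (i-1)) + of_real (w i) * (x i - x (i+1))) = z * x i"
    if "0 < i" "i < N - 1" for i using fe that by (simp add: fin_eqs_def)
  have FN: "of_real ((q (N-1))\<^sup>2 * w (N-2)) * (x (N-1) - x (N-2)) = z * x (N-1)"
    using fe by (simp add: fin_eqs_def)
  have G0: "of_real ((q (N-1-0))\<^sup>2 * w (N-2-0)) * (x (N-1-0) - x (N-1-1)) = z * x (N-1-0)"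
    using FN by (simp add: numeral_2_eq_2)
  have Gi: "of_real ((q (N-1-i))\<^sup>2) * (of_real (w (N-2-(i-1))) * (x (N-1-i) - x (N-1-(i-1)))
      + of_real (w (N-2-i)) * (x (N-1-i) - x (N-1-(i+1)))) = z * x (N-1-i)"
    if i: "0 < i" "i < N - 1" for i
  proof -
    define k where "k = N - 1 - i"
    have k: "0 < k" "k < N - 1" using i by (auto simp: k_def)
    have e: "N - 2 - (i-1) = k" "N - 1 - (i-1) = k + 1" "N - 2 - i = k - 1" "N - 1 - (i+1) = k - 1"
      using i by (auto simp: k_def)
    show ?thesis unfolding e k_def[symmetric] using Fi[OF k] by (simp add: algebra_simps)
  qed
  have GN: "of_real ((q (N-1-(N-1)))\<^sup>2 * w (N-2-(N-2))) * (x (N-1-(N-1)) - x (N-1-(N-2))) = z * x (N-1-(N-1))"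
  proof -
    have e: "N - 1 - (N - 2) = 1" using N2 by simp
    show ?thesis unfolding e using F0 by simp
  qed
  show ?thesis unfolding fin_eqs_def using G0 Gi GN by auto
qed

lemma fin_eqs_cong:
  assumes fe: "fin_eqs N q w x z" and N2: "N \<ge> 2"
    and hq: "\<And>i. i < N \<Longrightarrow> q' i = q i" and hw: "\<And>i. i < N - 1 \<Longrightarrow> w' i = w i"
    and hx: "\<And>i. i < N \<Longrightarrow> x' i = x i"
  shows "fin_eqs N q' w' x' z"
proof -
  have F0: "of_real ((q 0)\<^sup>2 * w 0) * (x 0 - x 1) = z * x 0" using fe by (simp add: fin_eqs_def)
  have Fi: "of_real ((q i)\<^sup>2) * (of_real (w (i-1)) * (x i - x (i-1)) + of_real (w i) * (x i - x (i+1))) = z * x i"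
    if "0 < i" "i < N - 1" for i using fe that by (simp add: fin_eqs_def)
  have FN: "of_real ((q (N-1))\<^sup>2 * w (N-2)) * (x (N-1) - x (N-2)) = z * x (N-1)"
    using fe by (simp add: fin_eqs_def)
  have G0: "of_real ((q' 0)\<^sup>2 * w' 0) * (x' 0 - x' 1) = z * x' 0"
    using F0 N2 hq[of 0] hw[of 0] hx[of 0] hx[of 1] by simp
  have Gi: "of_real ((q' i)\<^sup>2) * (of_real (w' (i-1)) * (x' i - x' (i-1)) + of_real (w' i) * (x' i - x' (i+1))) = z * x' i"
    if "0 < i" "i < N - 1" for i
    using Fi[OF that] that hq[of i] hw[of i] hw[of "i-1"] hx[of i] hx[of "i-1"] hx[of "i+1"] by simp
  have GN: "of_real ((q' (N-1))\<^sup>2 * w' (N-2)) * (x' (N-1) - x' (N-2)) = z * x' (N-1)"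
    using FN N2 hq[of "N-1"] hw[of "N-2"] hx[of "N-1"] hx[of "N-2"] by simp
  show ?thesis unfolding fin_eqs_def using G0 Gi GN by auto
qed

lemma concat_upt_split:
  assumes "a \<le> b"
  shows "concat (map f [0..<b]) = concat (map f [0..<a]) @ concat (map f [a..<b])"
proof -
  have "[0..<b] = [0..<a] @ [a..<b]" using assms
    by (metis le_add_diff_inverse upt_add_eq_append zero_le)
  thus ?thesis by simp
qed

lemma concat_len_ge:
  assumes "\<And>k. f k \<noteq> []"
  shows "length (concat (map f [0..<n])) \<ge> n"
proof (induction n)
  case (Suc n)
  have "length (f n) \<ge> 1" using assms[of n] by (cases "f n") auto
  thus ?case using Suc by simp
qed simp

lemma concat_periodic:
  assumes per: "\<And>k. f (k + M) = f k"
  shows "concat (map f [0..<q * M]) = concat (replicate q (concat (map f [0..<M])))"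
proof (induction q)
  case (Suc q)
  have fk: "f (k + q * M) = f k" for k
  proof (induction q)
    case (Suc q)
    have "k + Suc q * M = (k + q * M) + M" by simp
    thus ?case using Suc per by metis
  qed simp
  have "[0..<Suc q * M] = [0..<q * M] @ [q * M..<M + q * M]"
    by (metis add.commute mult_Suc upt_add_eq_append zero_le)
  moreover have "[q * M..<M + q * M] = map (\<lambda>k. k + q * M) [0..<M]"
    by (simp add: map_add_upt)
  ultimately have "map f [0..<Suc q * M] = map f [0..<q * M] @ map f [0..<M]"
    using fk by (simp add: comp_def)
  hence "concat (map f [0..<Suc q * M]) = concat (map f [0..<q * M]) @ concat (map f [0..<M])"
    by simp
  also have "\<dots> = concat (replicate q (concat (map f [0..<M]))) @ concat (map f [0..<M])"
    using Suc by simp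
  also have "\<dots> = concat (replicate (Suc q) (concat (map f [0..<M])))"
    by (simp flip: replicate_append_same)
  finally show ?case .
qed simp

lemma nth_concat_rep:
  assumes "L \<noteq> []" "j < q * length L"
  shows "concat (replicate q L) ! j = L ! (j mod length L)"
  using assms(2)
proof (induction q arbitrary: j)
  case (Suc q)
  show ?case
  proof (cases "j < length L")
    case True thus ?thesis by (simp add: nth_append)
  next
    case False
    hence "j - length L < q * length L" using Suc.prems by simp
    hence "concat (replicate q L) ! (j - length L) = L ! ((j - length L) mod length L)"
      using Suc.IH by blast
    thus ?thesis using False by (simp add: nth_append le_mod_geq)
  qed
qed simp

lemma periodic_nth:
  assumes M: "M > 0" and per: "\<And>k. f (k + M) = f k" and ne: "\<And>k. f k \<noteq> []"
  shows "concat (map f [0..<n+1]) ! n = concat (map f [0..<M]) ! (n mod length (concat (map f [0..<M])))"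
proof -
  define L where "L = concat (map f [0..<M])"
  have LM: "length L \<ge> M" unfolding L_def by (rule concat_len_ge[OF ne])
  have Lne: "L \<noteq> []" using LM M by auto
  have le: "n + 1 \<le> (n + 1) * M" using M
    by (metis One_nat_def Suc_leI mult.right_neutral mult_le_mono2)
  define P where "P = concat (map f [0..<n+1])"
  define Q where "Q = concat (map f [n+1..<(n+1) * M])"
  have big: "concat (map f [0..<(n+1) * M]) = P @ Q"
    unfolding P_def Q_def by (rule concat_upt_split[OF le])
  have lP: "length P \<ge> n + 1" unfolding P_def
    by (rule concat_len_ge) (rule ne)
  have "P ! n = (P @ Q) ! n" using lP by (simp add: nth_append)
  hence "concat (map f [0..<n+1]) ! n = concat (map f [0..<(n+1) * M]) ! n"
    using big by (simp only: P_def)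
  also have "\<dots> = concat (replicate (n+1) L) ! n"
    using concat_periodic[of f M "n+1", OF per] by (simp add: L_def)
  also have "\<dots> = L ! (n mod length L)"
  proof (rule nth_concat_rep[OF Lne])
    have "n < (n + 1) * 1" by simp
    also have "\<dots> \<le> (n + 1) * length L" using Lne by (intro mult_le_mono2) (cases L, auto)
    finally show "n < (n + 1) * length L" .
  qed
  finally show ?thesis by (simp add: L_def)
qed

lemma hlr_plus:
  assumes M: "chiM \<noteq> []" and ne: "\<forall>d\<in>set chiM. B d \<noteq> []"
  shows "half_line_res B (\<lambda>k. chiM ! (k mod length chiM)) (int n)
       = fin_array B chiM ! (n mod length (fin_array B chiM))"
proof -
  define f where "f k = B (chiM ! (k mod length chiM))" for k
  have Mp: "length chiM > 0" using M by simp
  have per: "f (k + length chiM) = f k" for k by (simp add: f_def)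
  have fne: "f k \<noteq> []" for k using ne Mp by (simp add: f_def)
  have L: "map f [0..<length chiM] = map B chiM"
  proof -
    have "map f [0..<length chiM] = map (\<lambda>k. B (chiM ! k)) [0..<length chiM]"
      by (rule map_cong) (auto simp: f_def)
    also have "\<dots> = map B (map ((!) chiM) [0..<length chiM])" by simp
    also have "\<dots> = map B chiM" by (simp add: map_nth)
    finally show ?thesis .
  qed
  have "half_line_res B (\<lambda>k. chiM ! (k mod length chiM)) (int n) = concat (map f [0..<n+1]) ! n"
    by (simp add: half_line_res_def f_def[abs_def])
  also have "\<dots> = concat (map f [0..<length chiM]) ! (n mod length (concat (map f [0..<length chiM])))"
    by (rule periodic_nth[of "length chiM" f, OF Mp per fne])
  also have "\<dots> = fin_array B chiM ! (n mod length (fin_array B chiM))"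
    by (simp add: L fin_array_def)
  finally show ?thesis .
qed

lemma hlr_minus:
  assumes M: "chiM \<noteq> []" and ne: "\<forall>d\<in>set chiM. B d \<noteq> []"
  shows "half_line_res B (\<lambda>k. chiM ! (length chiM - 1 - k mod length chiM)) (- int n - 1)
       = fin_array B chiM ! (length (fin_array B chiM) - Suc (n mod length (fin_array B chiM)))"
proof -
  define f where "f k = rev (B (chiM ! (length chiM - 1 - k mod length chiM)))" for k
  have Mp: "length chiM > 0" using M by simp
  have per: "f (k + length chiM) = f k" for k by (simp add: f_def)
  have fne: "f k \<noteq> []" for k using ne Mp by (simp add: f_def)
  have L: "concat (map f [0..<length chiM]) = rev (fin_array B chiM)"
  proof -
    have "map f [0..<length chiM] = map (\<lambda>k. rev (B (rev chiM ! k))) [0..<length chiM]"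
      by (rule map_cong) (auto simp: f_def rev_nth)
    also have "\<dots> = map rev (map B (map ((!) (rev chiM)) [0..<length (rev chiM)]))" by simp
    also have "\<dots> = map rev (rev (map B chiM))" by (simp only: map_nth rev_map)
    finally show ?thesis by (simp add: fin_array_def rev_concat)
  qed
  have N0: "fin_array B chiM \<noteq> []" using L fne[of 0] Mp
    by (metis concat_len_ge fne le_zero_eq length_0_conv length_rev not_gr0)
  have "half_line_res B (\<lambda>k. chiM ! (length chiM - 1 - k mod length chiM)) (- int n - 1)
      = concat (map f [0..<n+1]) ! n"
    by (simp add: half_line_res_def f_def[abs_def])
  also have "\<dots> = concat (map f [0..<length chiM]) ! (n mod length (concat (map f [0..<length chiM])))"
    by (rule periodic_nth[of "length chiM" f, OF Mp per fne])
  also have "\<dots> = rev (fin_array B chiM) ! (n mod length (fin_array B chiM))"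
    by (simp add: L)
  also have "\<dots> = fin_array B chiM ! (length (fin_array B chiM) - Suc (n mod length (fin_array B chiM)))"
    using N0 by (simp add: rev_nth)
  finally show ?thesis .
qed

lemma jac_a_eq:
  assumes "rlen (r i) > 0" "rlen (r (i+1)) > 0"
  shows "jac_a r i = - (qf (r i) * qf (r (i+1)) * (1 / rspace (r i)))"
  using assms by (simp add: jac_a_def qf_def real_sqrt_mult)

lemma jac_b_eq:
  assumes "rlen (r i) > 0"
  shows "jac_b r i = (qf (r i))\<^sup>2 * (1 / rspace (r (i-1)) + 1 / rspace (r i))"
  using assms by (simp add: jac_b_def qf_sq)

lemma beta_eq:
  assumes "rlen r > 0"
  shows "(wspeed r)\<^sup>2 / (rlen r * s) = (qf r)\<^sup>2 * (1 / s)"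
  using assms by (simp add: qf_sq)

theorem theorem4p7:
  fixes D :: nat and B :: "nat \<Rightarrow> resonator list" and chiM :: "nat list"
  assumes blocks: "\<forall>d\<in>{1..D}. is_block (B d)"
    and chiM: "set chiM \<subseteq> {1..D}"
    and N2: "length (fin_array B chiM) \<ge> 2"
    and ev: "eigenvalue (map_mat complex_of_real
                (material_mat (fin_array B chiM) * capacitance_mat (fin_array B chiM))) z"
  shows "z \<in> Sigma_set D B"
proof -
  define R where "R = fin_array B chiM"
  define N where "N = length R"
  define M where "M = length chiM"
  have N2': "N \<ge> 2" using N2 by (simp add: N_def R_def)
  have M0: "chiM \<noteq> []" using N2 by (auto simp: fin_array_def)
  have Mp: "M > 0" using M0 by (simp add: M_def)
  have ne: "\<forall>d\<in>set chiM. B d \<noteq> []" using blocks chiM by (auto simp: is_block_def)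
  have pos: "\<forall>r\<in>set R. wspeed r > 0 \<and> rlen r > 0 \<and> rspace r > 0"
  proof
    fix r assume "r \<in> set R"
    then obtain d where "d \<in> set chiM" "r \<in> set (B d)" by (auto simp: R_def fin_array_def)
    thus "wspeed r > 0 \<and> rlen r > 0 \<and> rspace r > 0" using blocks chiM by (auto simp: is_block_def)
  qed
  have posi: "wspeed (R!i) > 0" "rlen (R!i) > 0" "rspace (R!i) > 0" if "i < N" for i
    using pos that by (auto simp: N_def)
  obtain x where nz: "\<exists>i<N. x i \<noteq> 0" and fe: "fin_eqs N (\<lambda>i. qf (R!i)) (\<lambda>i. 1 / rspace (R!i)) x z"
    using mat_eqs[OF pos] N2 ev unfolding N_def R_def by blast
  have modN: "i mod N < N" for i using N2' by simp
  have fe': "fin_eqs N (\<lambda>i. qf (R!(i mod N))) (\<lambda>i. 1 / rspace (R!(i mod N))) x z"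
    by (rule fin_eqs_cong[OF fe N2']) auto
  have x0: "x 0 \<noteq> 0"
  proof (rule x0_nz[OF fe' N2' _ _ nz])
    show "qf (R ! (i mod N)) \<noteq> 0" for i using posi[OF modN[of i]] by (simp add: qf_def)
    show "1 / rspace (R ! (i mod N)) \<noteq> 0" for i using posi[OF modN[of i]] by simp
  qed
  define c where "c = x (N-1) / x 0"
  have cx: "c * x 0 = x (N-1)" using x0 by (simp add: c_def)
  show ?thesis
  proof (cases "cmod c \<le> 1")
    case True
    define chi where "chi k = chiM ! (k mod M)" for k
    define r where "r = half_line_res B chi"
    have chiD: "chi \<in> {chi. \<forall>k. chi k \<in> {1..D}}"
    proof -
      have "chi k \<in> set chiM" for k using Mp by (simp add: chi_def M_def)
      thus ?thesis using chiM by blast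
    qed
    have hr: "r (int n) = R ! (n mod N)" for n
      unfolding r_def chi_def M_def R_def N_def using hlr_plus[OF M0 ne] by simp
    define q where "q n = qf (r (int n))" for n
    define w where "w n = 1 / rspace (r (int n))" for n
    have rpos: "wspeed (r (int n)) > 0" "rlen (r (int n)) > 0" "rspace (r (int n)) > 0" for n
      using posi[OF modN[of n]] by (simp_all add: hr)
    have "z \<in> op_spectrum {i. i \<ge> 0} (J_plus B chi)"
    proof (rule bridge[where \<phi> = int and q = q and w = w and x = x and c = c and N = N])
      show "inj int" by (simp add: inj_on_def)
      show "range int = {i. i \<ge> 0}"
      proof
        show "range int \<subseteq> {i. i \<ge> 0}" by auto
        show "{i. i \<ge> 0} \<subseteq> range int"
        proof
          fix i :: int assume "i \<in> {i. i \<ge> 0}"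
          hence "i = int (nat i)" by simp
          thus "i \<in> range int" by blast
        qed
      qed
      show "N \<ge> 2" by (rule N2')
      show "q (n + N) = q n" for n using hr[of "n+N"] by (simp add: q_def hr)
      show "w (n + N) = w n" for n using hr[of "n+N"] by (simp add: w_def hr)
      show "q n \<noteq> 0" for n using rpos[of n] by (simp add: q_def qf_def)
      show "J_plus B chi u (int j) = (if j = 0 then of_real (- (q 0 * q 1 * w 0)) * u (int 1)
                     + of_real ((q 0)\<^sup>2 * w 0) * u (int 0)
                  else of_real (- (q (j-1) * q j * w (j-1))) * u (int (j-1))
                     + of_real (- (q j * q (j+1) * w j)) * u (int (j+1))
                     + of_real ((q j)\<^sup>2 * (w (j-1) + w j)) * u (int j))" for u j
      proof (cases "j = 0")
        case True
        have a0: "jac_a r 0 = - (q 0 * q 1 * w 0)"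
          using jac_a_eq[of r 0] rpos[of 0] rpos[of 1] by (simp add: q_def w_def)
        have b0: "(wspeed (r 0))\<^sup>2 / (rlen (r 0) * rspace (r 0)) = (q 0)\<^sup>2 * w 0"
          using beta_eq[of "r 0"] rpos[of 0] by (simp add: q_def w_def)
        have "J_plus B chi u (int j) = of_real (jac_a r 0) * u 1
            + of_real ((wspeed (r 0))\<^sup>2 / (rlen (r 0) * rspace (r 0))) * u 0"
          using True unfolding J_plus_def Let_def r_def by simp
        also have "\<dots> = of_real (- (q 0 * q 1 * w 0)) * u 1 + of_real ((q 0)\<^sup>2 * w 0) * u 0"
          by (simp only: a0 b0)
        finally show ?thesis using True by simp
      next
        case False
        have e1: "int j - 1 = int (j - 1)" "int j + 1 = int (j + 1)" using False by auto
        have a1: "jac_a r (int (j-1)) = - (q (j-1) * q j * w (j-1))"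
        proof -
          have h: "int (j-1) + 1 = int j" using False by simp
          have "rlen (r (int (j-1) + 1)) > 0" using rpos(2)[of j] unfolding h .
          from jac_a_eq[of r "int (j-1)", OF rpos(2)[of "j-1"] this] show ?thesis
            unfolding h q_def w_def .
        qed
        have a2: "jac_a r (int j) = - (q j * q (j+1) * w j)"
        proof -
          have h: "int (j+1) = int j + 1" by simp
          have "rlen (r (int j + 1)) > 0" using rpos(2)[of "j+1"] unfolding h .
          from jac_a_eq[of r "int j", OF rpos(2)[of j] this] show ?thesis
            unfolding q_def w_def h .
        qed
        have b1: "jac_b r (int j) = (q j)\<^sup>2 * (w (j-1) + w j)"
          using jac_b_eq[of r "int j", OF rpos(2)[of j]] unfolding e1(1) q_def w_def .
        have "J_plus B chi u (int j) = of_real (jac_a r (int j - 1)) * u (int j - 1)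
            + of_real (jac_a r (int j)) * u (int j + 1) + of_real (jac_b r (int j)) * u (int j)"
          using False unfolding J_plus_def Let_def r_def by simp
        also have "\<dots> = of_real (jac_a r (int (j-1))) * u (int (j-1))
            + of_real (jac_a r (int j)) * u (int (j+1)) + of_real (jac_b r (int j)) * u (int j)"
          by (simp only: e1)
        also have "\<dots> = of_real (- (q (j-1) * q j * w (j-1))) * u (int (j-1))
                     + of_real (- (q j * q (j+1) * w j)) * u (int (j+1))
                     + of_real ((q j)\<^sup>2 * (w (j-1) + w j)) * u (int j)"
          by (simp only: a1 a2 b1)
        finally show ?thesis using False by simp
      qed
      have feq: "fin_eqs N q w x z"
        by (rule fin_eqs_cong[OF fe N2']) (auto simp: q_def w_def hr)
      show "of_real ((q 0)\<^sup>2 * w 0) * (x 0 - x 1) = z * x 0" using feq by (simp add: fin_eqs_def)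
      show "of_real ((q i)\<^sup>2) * (of_real (w (i-1)) * (x i - x (i-1)) + of_real (w i) * (x i - x (i+1))) = z * x i"
        if "0 < i" "i < N - 1" for i using feq that by (simp add: fin_eqs_def)
      show "of_real ((q (N-1))\<^sup>2 * w (N-2)) * (x (N-1) - x (N-2)) = z * x (N-1)"
        using feq by (simp add: fin_eqs_def)
      show "c * x 0 = x (N-1)" by (rule cx)
      show "x 0 \<noteq> 0" by (rule x0)
      show "cmod c \<le> 1" by (rule True)
    qed
    thus ?thesis using chiD unfolding Sigma_set_def by blast
  next
    case False
    hence cnz: "c \<noteq> 0" by auto
    define chi where "chi k = chiM ! (M - 1 - k mod M)" for k
    define r where "r = half_line_res B chi"
    define \<phi> where "\<phi> j = - int j - 1" for j
    have chiD: "chi \<in> {chi. \<forall>k. chi k \<in> {1..D}}"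
    proof -
      have "chi k \<in> set chiM" for k unfolding chi_def
        by (rule nth_mem) (use Mp in \<open>simp add: M_def\<close>)
      thus ?thesis using chiM by blast
    qed
    have hr: "r (\<phi> n) = R ! (N - Suc (n mod N))" for n
    proof -
      have "r (\<phi> n) = half_line_res B (\<lambda>k. chiM ! (length chiM - 1 - k mod length chiM)) (- int n - 1)"
        by (simp only: r_def \<phi>_def chi_def[abs_def] M_def)
      also have "\<dots> = R ! (N - Suc (n mod N))" unfolding R_def N_def by (rule hlr_minus[OF M0 ne])
      finally show ?thesis .
    qed
    have NS: "N - Suc (n mod N) < N" for n using N2' by simp
    define q where "q n = qf (r (\<phi> n))" for n
    define w where "w n = 1 / rspace (r (\<phi> (n+1)))" for n
    define x' where "x' j = x (N - 1 - j)" for j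
    have rpos: "wspeed (r (\<phi> n)) > 0" "rlen (r (\<phi> n)) > 0" "rspace (r (\<phi> n)) > 0" for n
      using posi[OF NS[of n]] by (simp_all add: hr)
    have "z \<in> op_spectrum {i. i < 0} (J_minus B chi)"
    proof (rule bridge[where \<phi> = \<phi> and q = q and w = w and x = x' and c = "1 / c" and N = N])
      show "inj \<phi>" by (simp add: inj_on_def \<phi>_def)
      show "range \<phi> = {i. i < 0}"
      proof
        show "range \<phi> \<subseteq> {i. i < 0}" by (auto simp: \<phi>_def)
        show "{i. i < 0} \<subseteq> range \<phi>"
        proof
          fix i :: int assume "i \<in> {i. i < 0}"
          hence "i = \<phi> (nat (- i - 1))" by (simp add: \<phi>_def)
          thus "i \<in> range \<phi>" by blast
        qed
      qed
      show "N \<ge> 2" by (rule N2')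
      show "q (n + N) = q n" for n by (simp add: q_def hr)
      show "w (n + N) = w n" for n
      proof -
        have e: "n + N + 1 = (n + 1) + N" by simp
        have "w (n + N) = 1 / rspace (r (\<phi> ((n + 1) + N)))" unfolding w_def e ..
        also have "\<dots> = 1 / rspace (R ! (N - Suc ((n + 1) mod N)))" by (simp only: hr mod_add_self2)
        also have "\<dots> = w n" by (simp only: w_def hr)
        finally show ?thesis .
      qed
      show "q n \<noteq> 0" for n using rpos[of n] by (simp add: q_def qf_def)
      show "J_minus B chi u (\<phi> j) = (if j = 0 then of_real (- (q 0 * q 1 * w 0)) * u (\<phi> 1)
                     + of_real ((q 0)\<^sup>2 * w 0) * u (\<phi> 0)
                  else of_real (- (q (j-1) * q j * w (j-1))) * u (\<phi> (j-1))
                     + of_real (- (q j * q (j+1) * w j)) * u (\<phi> (j+1))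
                     + of_real ((q j)\<^sup>2 * (w (j-1) + w j)) * u (\<phi> j))" for u j
      proof (cases "j = 0")
        case True
        have p0: "\<phi> 0 = -1" "\<phi> 1 = -2" by (simp_all add: \<phi>_def)
        have a0: "jac_a r (-2) = - (q 0 * q 1 * w 0)"
          using jac_a_eq[of r "-2"] rpos[of 0] rpos[of 1] p0 by (simp add: q_def w_def)
        have b0: "(wspeed (r (-1)))\<^sup>2 / (rlen (r (-1)) * rspace (r (-2))) = (q 0)\<^sup>2 * w 0"
          using beta_eq[of "r (-1)"] rpos[of 0] p0 by (simp add: q_def w_def)
        have "J_minus B chi u (\<phi> j) = of_real (jac_a r (-2)) * u (-2)
            + of_real ((wspeed (r (-1)))\<^sup>2 / (rlen (r (-1)) * rspace (r (-2)))) * u (-1)"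
          using True p0 unfolding J_minus_def Let_def r_def by simp
        also have "\<dots> = of_real (- (q 0 * q 1 * w 0)) * u (\<phi> 1) + of_real ((q 0)\<^sup>2 * w 0) * u (\<phi> 0)"
          unfolding p0 by (simp only: a0 b0)
        finally show ?thesis using True by simp
      next
        case False
        have e1: "\<phi> j - 1 = \<phi> (j + 1)" "\<phi> j + 1 = \<phi> (j - 1)" "\<phi> j \<noteq> -1" "\<phi> j \<le> -2"
          "\<phi> (j + 1) + 1 = \<phi> j"
          using False by (auto simp: \<phi>_def)
        have h1: "\<phi> (j+1) + 1 = \<phi> j" "\<phi> j + 1 = \<phi> (j-1)" "\<phi> j - 1 = \<phi> (j+1)" "j - 1 + 1 = j"
          using False by (auto simp: \<phi>_def)
        have a1: "jac_a r (\<phi> (j+1)) = - (q (j+1) * q j * w j)"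
        proof -
          have "rlen (r (\<phi> (j+1) + 1)) > 0" using rpos(2)[of j] unfolding h1(1) .
          from jac_a_eq[of r "\<phi> (j+1)", OF rpos(2)[of "j+1"] this] show ?thesis
            unfolding h1(1) q_def w_def .
        qed
        have a2: "jac_a r (\<phi> j) = - (q j * q (j-1) * w (j-1))"
        proof -
          have "rlen (r (\<phi> j + 1)) > 0" using rpos(2)[of "j-1"] unfolding h1(2) .
          from jac_a_eq[of r "\<phi> j", OF rpos(2)[of j] this] show ?thesis
            unfolding h1(2) q_def w_def h1(4) .
        qed
        have b1: "jac_b r (\<phi> j) = (q j)\<^sup>2 * (w (j-1) + w j)"
        proof -
          from jac_b_eq[of r "\<phi> j", OF rpos(2)[of j]]
          have "jac_b r (\<phi> j) = (q j)\<^sup>2 * (w j + w (j-1))"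
            unfolding h1(3) q_def w_def h1(4) .
          thus ?thesis by (simp only: add.commute)
        qed
        have "J_minus B chi u (\<phi> j) = of_real (jac_a r (\<phi> (j+1))) * u (\<phi> (j+1))
            + of_real (jac_a r (\<phi> j)) * u (\<phi> (j-1)) + of_real (jac_b r (\<phi> j)) * u (\<phi> j)"
          using e1 unfolding J_minus_def Let_def r_def by simp
        also have "\<dots> = of_real (- (q (j+1) * q j * w j)) * u (\<phi> (j+1))
            + of_real (- (q j * q (j-1) * w (j-1))) * u (\<phi> (j-1))
            + of_real ((q j)\<^sup>2 * (w (j-1) + w j)) * u (\<phi> j)"
          by (simp only: a1 a2 b1)
        finally show ?thesis using False by (simp add: algebra_simps)
      qed
      have feq: "fin_eqs N q w x' z"
      proof (rule fin_eqs_cong[OF fin_eqs_rev[OF fe N2'] N2'])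
        show "q i = qf (R ! (N - 1 - i))" if "i < N" for i using that by (simp add: q_def hr)
        show "w i = 1 / rspace (R ! (N - 2 - i))" if "i < N - 1" for i
        proof -
          have "(i + 1) mod N = i + 1" using that by simp
          moreover have "N - Suc (i + 1) = N - 2 - i" by simp
          ultimately show ?thesis by (simp add: w_def hr del: add_Suc_right)
        qed
        show "x' i = x (N - 1 - i)" if "i < N" for i by (simp add: x'_def)
      qed
      show "of_real ((q 0)\<^sup>2 * w 0) * (x' 0 - x' 1) = z * x' 0" using feq by (simp add: fin_eqs_def)
      show "of_real ((q i)\<^sup>2) * (of_real (w (i-1)) * (x' i - x' (i-1)) + of_real (w i) * (x' i - x' (i+1))) = z * x' i"
        if "0 < i" "i < N - 1" for i using feq that by (simp add: fin_eqs_def)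
      show "of_real ((q (N-1))\<^sup>2 * w (N-2)) * (x' (N-1) - x' (N-2)) = z * x' (N-1)"
        using feq by (simp add: fin_eqs_def)
      show "1 / c * x' 0 = x' (N-1)" using cx cnz by (simp add: x'_def field_simps)
      show "x' 0 \<noteq> 0" using cx[symmetric] cnz x0 by (simp add: x'_def)
      show "cmod (1 / c) \<le> 1"
      proof -
        have "cmod c > 1" using False by simp
        hence "1 / cmod c \<le> 1" by (simp add: divide_le_eq)
        thus ?thesis by (simp add: norm_divide)
      qed
    qed
    thus ?thesis using chiD unfolding Sigma_set_def by blast
  qed
qed

end
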